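(* Let $n\ge 2$ and let $m,p,k$ be integers with $1\le m\le p\le n$, $1\le k\le n$ and $m<n$. The number of $\alpha\in\mathcal{ODCT}_n$ with $h(\alpha)=p$, $w^+(\alpha)=k$ and $f(\alpha)=m$ is $$F(n;p,k,m)=\begin{cases}\binom{n-m-1}{p-m}, & p=k,\\ 0, & p\ne k.\end{cases}$$
   Context: $X_n=\{1,2,\dots,n\}$ with its usual order; maps are written on the right ($x\alpha$). A map $\alpha:X_n\to X_n$ is order-preserving if $x\le y$ implies $x\alpha\le y\alpha$, order-decreasing if $x\alpha\le x$ for all $x$, and a contraction if $|x\alpha-y\alpha|\le|x-y|$ for all $x,y$. $\mathcal{ODCT}_n$ is the set of all maps $X_n\to X_n$ (defined on all of $X_n$) that are order-preserving, order-decreasing contractions. Height $h(\alpha)=|\mathrm{Im}\,\alpha|$; right waist $w^+(\alpha)=\max(\mathrm{Im}\,\alpha)$; fix $f(\alpha)=|\{x\in X_n:x\alpha=x\}|$. Binomial coefficients $\binom{a}{b}$ with $b>a\ge0$ are $0$. *)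

theory Defs
  imports "HOL-Library.FuncSet"
begin

text \<open>Full transformations of X_n = {1..n}, represented as extensional functions
  (value undefined outside {1..n}).\<close>

definition ODCT :: "nat \<Rightarrow> (nat \<Rightarrow> nat) set" where
  "ODCT n = {\<alpha> \<in> {1..n} \<rightarrow>\<^sub>E {1..n}.
      (\<forall>x\<in>{1..n}. \<forall>y\<in>{1..n}. x \<le> y \<longrightarrow> \<alpha> x \<le> \<alpha> y) \<and>
      (\<forall>x\<in>{1..n}. \<alpha> x \<le> x) \<and>
      (\<forall>x\<in>{1..n}. \<forall>y\<in>{1..n}. \<bar>int (\<alpha> x) - int (\<alpha> y)\<bar> \<le> \<bar>int x - int y\<bar>)}"

definition height :: "nat \<Rightarrow> (nat \<Rightarrow> nat) \<Rightarrow> nat" where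
  "height n \<alpha> = card (\<alpha> ` {1..n})"

definition right_waist :: "nat \<Rightarrow> (nat \<Rightarrow> nat) \<Rightarrow> nat" where
  "right_waist n \<alpha> = Max (\<alpha> ` {1..n})"

definition fix_count :: "nat \<Rightarrow> (nat \<Rightarrow> nat) \<Rightarrow> nat" where
  "fix_count n \<alpha> = card {x \<in> {1..n}. \<alpha> x = x}"

end

theory Submission
  imports Defs
begin

definition fU :: "nat \<Rightarrow> nat set \<Rightarrow> nat \<Rightarrow> nat" where
  "fU n U = (\<lambda>x. if x \<in> {1..n} then 1 + card (U \<inter> {..x}) else undefined)"

definition DD :: "nat \<Rightarrow> (nat \<Rightarrow> nat) \<Rightarrow> nat set" where
  "DD n a = {y\<in>{2..n}. a y = Suc (a (y-1))}"

lemma cstep: "card (U \<inter> {..Suc x}) = card (U \<inter> {..x}) + (if Suc x \<in> U then 1 else 0)"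
proof -
  have "U \<inter> {..Suc x} = (if Suc x \<in> U then insert (Suc x) (U \<inter> {..x}) else U \<inter> {..x})"
    by (auto simp: le_Suc_eq)
  then show ?thesis by auto
qed

lemma c_le: "U \<subseteq> {2..n} \<Longrightarrow> card (U \<inter> {..x}) \<le> x - 1"
proof -
  assume "U \<subseteq> {2..n}"
  then have "U \<inter> {..x} \<subseteq> {2..x}" by auto
  then have "card (U \<inter> {..x}) \<le> card {2..x}" by (intro card_mono) auto
  then show ?thesis by simp
qed

lemma c_mono: "(x::nat) \<le> y \<Longrightarrow> card ((U::nat set) \<inter> {..x}) \<le> card (U \<inter> {..y})"
proof -
  assume "x \<le> y"
  moreover have "finite (U \<inter> {..y})" by (meson finite_Int finite_atMost)
  ultimately show ?thesis by (intro card_mono) auto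
qed

lemma c_diff: "card (U \<inter> {..x+d}) \<le> card (U \<inter> {..x}) + d"
proof (induction d)
  case 0 then show ?case by simp
next
  case (Suc d) then show ?case using cstep[of U "x+d"] by simp
qed

lemma c_diff': "x \<le> y \<Longrightarrow> card (U \<inter> {..y}) \<le> card (U \<inter> {..x}) + (y - x)"
  using c_diff[of U x "y-x"] by simp

lemma fU_ODCT: assumes "U \<subseteq> {2..n}" shows "fU n U \<in> ODCT n"
proof -
  have le: "card (U \<inter> {..x}) \<le> x - 1" for x using c_le[OF assms] .
  have pie: "fU n U \<in> {1..n} \<rightarrow>\<^sub>E {1..n}"
  proof (rule PiE_I)
    fix x assume x: "x \<in> {1..n}"
    then show "fU n U x \<in> {1..n}" using le[of x] by (auto simp: fU_def)
  next
    fix x assume "x \<notin> {1..n}" then show "fU n U x = undefined" by (auto simp: fU_def)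
  qed
  have mono: "\<forall>x\<in>{1..n}. \<forall>y\<in>{1..n}. x \<le> y \<longrightarrow> fU n U x \<le> fU n U y"
    using c_mono by (auto simp: fU_def)
  have dec: "\<forall>x\<in>{1..n}. fU n U x \<le> x"
  proof
    fix x assume x: "x \<in> {1..n}"
    then show "fU n U x \<le> x" using le[of x] by (auto simp: fU_def)
  qed
  have con: "\<bar>int (fU n U x) - int (fU n U y)\<bar> \<le> \<bar>int x - int y\<bar>"
    if "x \<in> {1..n}" "y \<in> {1..n}" for x y
  proof (cases "x \<le> y")
    case True
    then show ?thesis using that c_mono[OF True, of U] c_diff'[OF True, of U]
      by (simp add: fU_def)
  next
    case False
    then have F: "y \<le> x" by simp
    then show ?thesis using that c_mono[OF F, of U] c_diff'[OF F, of U]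
      by (simp add: fU_def)
  qed
  show ?thesis unfolding ODCT_def using pie mono dec con by blast
qed

lemma DD_fU: assumes "U \<subseteq> {2..n}" shows "DD n (fU n U) = U"
proof -
  have "y \<in> DD n (fU n U) \<longleftrightarrow> y \<in> U" for y
  proof (cases "y \<in> {2..n}")
    case True
    define z where "z = y - 1"
    have z: "y = Suc z" "z \<ge> 1" using True by (auto simp: z_def)
    then show ?thesis using True cstep[of U z] by (auto simp: DD_def fU_def)
  next
    case False
    then show ?thesis using assms by (auto simp: DD_def)
  qed
  then show ?thesis by blast
qed

lemma ODCT_fU: assumes "a \<in> ODCT n" shows "fU n (DD n a) = a"
proof -
  have pie: "a \<in> {1..n} \<rightarrow>\<^sub>E {1..n}"
    and mono: "\<forall>x\<in>{1..n}. \<forall>y\<in>{1..n}. x \<le> y \<longrightarrow> a x \<le> a y"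
    and dec: "\<forall>x\<in>{1..n}. a x \<le> x"
    and con: "\<forall>x\<in>{1..n}. \<forall>y\<in>{1..n}. \<bar>int (a x) - int (a y)\<bar> \<le> \<bar>int x - int y\<bar>"
    using assms unfolding ODCT_def by blast+
  have DDs: "DD n a \<subseteq> {2..n}" by (auto simp: DD_def)
  have claim: "1 \<le> x \<Longrightarrow> x \<le> n \<Longrightarrow> a x = 1 + card (DD n a \<inter> {..x})" for x
  proof (induction x)
    case 0 then show ?case by simp
  next
    case (Suc x)
    show ?case
    proof (cases "x = 0")
      case True
      have "a 1 \<in> {1..n}" using pie Suc.prems True by auto
      moreover have "a 1 \<le> 1" using dec Suc.prems True by auto
      moreover have "DD n a \<inter> {..1} = {}" using DDs by auto
      ultimately show ?thesis using True by simp
    next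
      case False
      then have x1: "1 \<le> x" "x \<le> n" using Suc.prems by auto
      have IH: "a x = 1 + card (DD n a \<inter> {..x})" using Suc.IH x1 by simp
      have m: "a x \<le> a (Suc x)" using mono x1 Suc.prems by auto
      have c: "\<bar>int (a (Suc x)) - int (a x)\<bar> \<le> \<bar>int (Suc x) - int x\<bar>"
        using con[rule_format, of "Suc x" x] x1 Suc.prems by auto
      then have "a (Suc x) = a x \<or> a (Suc x) = Suc (a x)" using m by auto
      moreover have "Suc x \<in> DD n a \<longleftrightarrow> a (Suc x) = Suc (a x)"
        using x1 Suc.prems by (auto simp: DD_def)
      ultimately show ?thesis using IH cstep[of "DD n a" x] by auto
    qed
  qed
  show ?thesis
  proof
    fix x show "fU n (DD n a) x = a x"
    proof (cases "x \<in> {1..n}")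
      case True then show ?thesis using claim by (auto simp: fU_def)
    next
      case False then show ?thesis using pie by (auto simp: fU_def PiE_def extensional_def)
    qed
  qed
qed

lemma ODCT_eq: "ODCT n = fU n ` Pow {2..n}"
proof
  show "ODCT n \<subseteq> fU n ` Pow {2..n}"
  proof
    fix a assume a: "a \<in> ODCT n"
    have "DD n a \<in> Pow {2..n}" by (auto simp: DD_def)
    then show "a \<in> fU n ` Pow {2..n}" using ODCT_fU[OF a] by (metis rev_image_eqI)
  qed
next
  show "fU n ` Pow {2..n} \<subseteq> ODCT n" using fU_ODCT by auto
qed

lemma inj_fU: "inj_on (fU n) (Pow {2..n})"
  by (rule inj_on_inverseI[where g="DD n"]) (simp add: DD_fU)

lemma finInt: "finite ((U::nat set) \<inter> {..x})"
  by (meson finite_Int finite_atMost)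

lemma height_fU: assumes "U \<subseteq> {2..n}" "1 \<le> n" shows "height n (fU n U) = card U + 1"
proof -
  have fin: "finite U" using assms finite_subset[of U "{2..n}"] by auto
  have cU: "card (U \<inter> {..x}) \<le> card U" for x using fin by (intro card_mono) auto
  have sub: "fU n U ` {1..n} \<subseteq> {1..card U + 1}"
  proof
    fix y assume "y \<in> fU n U ` {1..n}"
    then obtain x where "x \<in> {1..n}" "y = fU n U x" by auto
    then show "y \<in> {1..card U + 1}" using cU[of x] by (auto simp: fU_def)
  qed
  have ins: "insert 1 U \<subseteq> {1..n}" using assms by auto
  have strict: "fU n U u < fU n U v" if u: "u \<in> insert 1 U" and v: "v \<in> insert 1 U" and uv: "u < v" for u v
  proof -
    have "u \<ge> 1" using u assms by auto
    then have vU: "v \<in> U" using v uv by auto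
    have s1: "U \<inter> {..u} \<subseteq> U \<inter> {..v}" using uv by auto
    have s2: "v \<in> U \<inter> {..v}" "v \<notin> U \<inter> {..u}" using vU uv by auto
    have "U \<inter> {..u} \<subset> U \<inter> {..v}" using s1 s2 by blast
    then have "card (U \<inter> {..u}) < card (U \<inter> {..v})" using psubset_card_mono finInt by blast
    then show ?thesis using u v ins by (auto simp: fU_def)
  qed
  have inj: "inj_on (fU n U) (insert 1 U)"
    unfolding inj_on_def by (metis linorder_neq_iff less_irrefl strict)
  have "card (insert 1 U) = card (fU n U ` insert 1 U)" using card_image[OF inj] by simp
  also have "\<dots> \<le> card (fU n U ` {1..n})" using ins by (intro card_mono) auto
  finally have ge: "card (insert 1 U) \<le> card (fU n U ` {1..n})" .
  have "1 \<notin> U" using assms by auto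
  then have ci: "card (insert 1 U) = card U + 1" using fin by simp
  have le: "card (fU n U ` {1..n}) \<le> card U + 1" using card_mono[OF _ sub] by simp
  show ?thesis unfolding height_def using ge ci le by simp
qed

lemma waist_fU: assumes "U \<subseteq> {2..n}" "1 \<le> n" shows "right_waist n (fU n U) = card U + 1"
proof -
  have fin: "finite U" using assms finite_subset[of U "{2..n}"] by auto
  have cU: "card (U \<inter> {..x}) \<le> card U" for x using fin by (intro card_mono) auto
  have "U \<inter> {..n} = U" using assms by auto
  then have "fU n U n = card U + 1" using assms by (simp add: fU_def)
  then have mem: "card U + 1 \<in> fU n U ` {1..n}" using assms by (metis atLeastAtMost_iff order_refl rev_image_eqI)
  have bnd: "y \<le> card U + 1" if "y \<in> fU n U ` {1..n}" for y
    using that cU by (auto simp: fU_def)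
  show ?thesis unfolding right_waist_def by (rule Max_eqI) (use mem bnd in auto)
qed

lemma fix_fU: assumes "U \<subseteq> {2..n}" shows "fix_count n (fU n U) = card {x\<in>{1..n}. {2..x} \<subseteq> U}"
proof -
  have "fU n U x = x \<longleftrightarrow> {2..x} \<subseteq> U" if x: "x \<in> {1..n}" for x
  proof
    assume h: "fU n U x = x"
    have s: "U \<inter> {..x} \<subseteq> {2..x}" using assms by auto
    have "card (U \<inter> {..x}) = card {2..x}" using h x by (auto simp: fU_def)
    then have "U \<inter> {..x} = {2..x}" using card_subset_eq[OF _ s] by simp
    then show "{2..x} \<subseteq> U" by auto
  next
    assume h: "{2..x} \<subseteq> U"
    then have "U \<inter> {..x} = {2..x}" using assms by auto
    then show "fU n U x = x" using x by (auto simp: fU_def)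
  qed
  then have "{x\<in>{1..n}. fU n U x = x} = {x\<in>{1..n}. {2..x} \<subseteq> U}" by auto
  then show ?thesis unfolding fix_count_def by simp
qed

lemma fixchar: assumes "U \<subseteq> {2..n}" "1 \<le> m" "m < n"
  shows "card {x\<in>{1..n}. {2..x} \<subseteq> U} = m \<longleftrightarrow> {2..m} \<subseteq> U \<and> Suc m \<notin> U"
proof
  let ?F = "{x\<in>{1..n}. {2..x} \<subseteq> U}"
  have finF: "finite ?F" by simp
  assume c: "card ?F = m"
  show "{2..m} \<subseteq> U \<and> Suc m \<notin> U"
  proof (rule ccontr)
    assume "\<not> ({2..m} \<subseteq> U \<and> Suc m \<notin> U)"
    then consider (a) y where "y \<in> {2..m}" "y \<notin> U" | (b) "{2..m} \<subseteq> U" "Suc m \<in> U" by blast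
    then show False
    proof cases
      case (a y)
      have "?F \<subseteq> {1..y-1}"
      proof
        fix x assume x: "x \<in> ?F"
        show "x \<in> {1..y-1}"
        proof (rule ccontr)
          assume "x \<notin> {1..y-1}"
          then have "y \<in> {2..x}" using x a by auto
          then show False using x a by auto
        qed
      qed
      then have "card ?F \<le> card {1..y-1}" by (intro card_mono) auto
      with c a show False by auto
    next
      case b
      have "{1..Suc m} \<subseteq> ?F"
      proof
        fix x assume x: "x \<in> {1..Suc m}"
        have "{2..x} \<subseteq> U"
        proof
          fix z assume "z \<in> {2..x}"
          then have "z \<in> {2..m} \<or> z = Suc m" using x by auto
          then show "z \<in> U" using b by auto
        qed
        then show "x \<in> ?F" using x assms by auto
      qed
      then have "card {1..Suc m} \<le> card ?F" using card_mono[OF finF] by blast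
      with c show False by simp
    qed
  qed
next
  let ?F = "{x\<in>{1..n}. {2..x} \<subseteq> U}"
  assume h: "{2..m} \<subseteq> U \<and> Suc m \<notin> U"
  have "?F = {1..m}"
  proof
    show "?F \<subseteq> {1..m}"
    proof
      fix x assume x: "x \<in> ?F"
      show "x \<in> {1..m}"
      proof (rule ccontr)
        assume "x \<notin> {1..m}"
        then have "Suc m \<in> {2..x}" using x assms by auto
        moreover have "{2..x} \<subseteq> U" using x by blast
        ultimately show False using h by blast
      qed
    qed
  next
    show "{1..m} \<subseteq> ?F"
    proof
      fix x assume x: "x \<in> {1..m}"
      have "{2..x} \<subseteq> {2..m}" using x by auto
      then have "{2..x} \<subseteq> U" using h by blast
      then show "x \<in> ?F" using x assms by auto
    qed
  qed
  then show "card ?F = m" by simp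
qed

theorem proposition4p1:
  fixes n m p k :: nat
  assumes "n \<ge> 2" and "1 \<le> m" and "m \<le> p" and "p \<le> n"
    and "1 \<le> k" and "k \<le> n" and "m < n"
  shows "card {\<alpha> \<in> ODCT n. height n \<alpha> = p \<and> right_waist n \<alpha> = k \<and> fix_count n \<alpha> = m}
         = (if p = k then (n - m - 1) choose (p - m) else 0)"
proof -
  define P where "P = (\<lambda>a. height n a = p \<and> right_waist n a = k \<and> fix_count n a = m)"
  have S: "{a \<in> ODCT n. P a} = fU n ` {U \<in> Pow {2..n}. P (fU n U)}" using ODCT_eq by auto
  have inj: "inj_on (fU n) {U \<in> Pow {2..n}. P (fU n U)}" using inj_fU by (rule inj_on_subset) auto
  have card1: "card {a \<in> ODCT n. P a} = card {U \<in> Pow {2..n}. P (fU n U)}"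
    using S card_image[OF inj] by simp
  have Pchar: "P (fU n U) \<longleftrightarrow> card U + 1 = p \<and> card U + 1 = k \<and> {2..m} \<subseteq> U \<and> Suc m \<notin> U"
    if U: "U \<subseteq> {2..n}" for U
    using height_fU[OF U] waist_fU[OF U] fix_fU[OF U] fixchar[OF U] assms unfolding P_def by auto
  have goal: "card {a \<in> ODCT n. P a} = (if p = k then (n - m - 1) choose (p - m) else 0)"
  proof (cases "p = k")
    case False
    then have "{U \<in> Pow {2..n}. P (fU n U)} = {}" using Pchar by auto
    then show ?thesis using card1 False by simp
  next
    case True
    have E: "{U \<in> Pow {2..n}. P (fU n U)} = (\<lambda>V. V \<union> {2..m}) ` {V. V \<subseteq> {m+2..n} \<and> card V = p - m}"
    proof
      show "(\<lambda>V. V \<union> {2..m}) ` {V. V \<subseteq> {m+2..n} \<and> card V = p - m} \<subseteq> {U \<in> Pow {2..n}. P (fU n U)}"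
      proof
        fix U assume "U \<in> (\<lambda>V. V \<union> {2..m}) ` {V. V \<subseteq> {m+2..n} \<and> card V = p - m}"
        then obtain V where V: "V \<subseteq> {m+2..n}" "card V = p - m" and U: "U = V \<union> {2..m}" by auto
        have finV: "finite V" using V finite_subset[of V "{m+2..n}"] by auto
        have "card U = card V + card {2..m}" unfolding U
          using V finV by (intro card_Un_disjoint) auto
        then have cU: "card U + 1 = p" using V assms by simp
        have Us: "U \<subseteq> {2..n}" using U V assms by auto
        have "Suc m \<notin> U" using U V by auto
        then show "U \<in> {U \<in> Pow {2..n}. P (fU n U)}" using Pchar[OF Us] cU True U Us by auto
      qed
    next
      show "{U \<in> Pow {2..n}. P (fU n U)} \<subseteq> (\<lambda>V. V \<union> {2..m}) ` {V. V \<subseteq> {m+2..n} \<and> card V = p - m}"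
      proof
        fix U assume "U \<in> {U \<in> Pow {2..n}. P (fU n U)}"
        then have Us: "U \<subseteq> {2..n}" and PU: "P (fU n U)" by auto
        then have pr: "card U + 1 = p" "{2..m} \<subseteq> U" "Suc m \<notin> U" using Pchar by auto
        have finU: "finite U" using Us finite_subset[of U "{2..n}"] by auto
        have eq: "U = (U - {2..m}) \<union> {2..m}" using pr by auto
        have sub: "U - {2..m} \<subseteq> {m+2..n}"
        proof
          fix z assume z: "z \<in> U - {2..m}"
          then have "z \<in> {2..n}" "z \<noteq> Suc m" using Us pr by auto
          then show "z \<in> {m+2..n}" using z by auto
        qed
        have "card (U - {2..m}) = card U - card {2..m}" using pr finU by (intro card_Diff_subset) auto
        then have "card (U - {2..m}) = p - m" using pr assms by simp
        then show "U \<in> (\<lambda>V. V \<union> {2..m}) ` {V. V \<subseteq> {m+2..n} \<and> card V = p - m}"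
          using eq sub by (metis (mono_tags, lifting) mem_Collect_eq rev_image_eqI)
      qed
    qed
    have injV: "inj_on (\<lambda>V. V \<union> {2..m}) {V. V \<subseteq> {m+2..n} \<and> card V = p - m}"
      by (rule inj_on_inverseI[where g="\<lambda>U. U - {2..m}"]) auto
    have "card {U \<in> Pow {2..n}. P (fU n U)} = card {V. V \<subseteq> {m+2..n} \<and> card V = p - m}"
      using E card_image[OF injV] by simp
    also have "\<dots> = (n - m - 1) choose (p - m)"
      using n_subsets[of "{m+2..n}" "p - m"] by simp
    finally show ?thesis using card1 True by simp
  qed
  then show ?thesis unfolding P_def .
qed

end
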